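(* Let $a=(a_{00},a_{01},a_{10},a_{11})$ have strictly positive entries, $a_\triangle=a_{01}+a_{10}$, $a_{++}=a_{00}+a_{01}+a_{10}+a_{11}$, and let $x_{++}\ge0$ be a fixed integer. Let $p_H(\eta)=\mathrm{Beta}(\eta\mid a_\triangle,a_{++}-a_\triangle)$, $p_H(\eta,\theta)=p_H(\eta)\,\mathrm{Beta}(\theta\mid a_{01},a_{10})$, and for imaginary counts $(x_{01},x_{10},x_{++}-x_\triangle)$, $x_\triangle=x_{01}+x_{10}$, multinomial with $x_{++}$ trials and cell probabilities $(\eta\theta,\eta(1-\theta),1-\eta)$, define the intrinsic prior $$p^I_H(\eta,\theta\mid H_0)=p_H(\eta,\theta)\,E_{\eta,\theta}\!\left[\frac{B(a_{01},a_{10})}{2^{x_\triangle}B(a_{01}+x_{01},a_{10}+x_{10})}\right].$$ Then the marginal density of $\eta$ under the intrinsic prior equals the original marginal prior: $p^I_H(\eta\mid H_0)=\int_0^1p^I_H(\eta,\theta\mid H_0)\,d\theta=p_H(\eta)$ for all $\eta\in(0,1)$.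
   Context: $B(A,B)=\int_0^1t^{A-1}(1-t)^{B-1}dt$ is the Beta function and $\mathrm{Beta}(u\mid A,B)=u^{A-1}(1-u)^{B-1}/B(A,B)$ the Beta density. Setting: a $2\times2$ matched-pair table with cell probabilities $\pi\sim\mathrm{Dir}(a)$ under $H$, $\eta=\pi_{01}+\pi_{10}$ (swing probability), $\theta=\pi_{01}/(\pi_{01}+\pi_{10})$; $H_0:\theta=1/2$ with prior on $\eta$ equal to $p_H(\eta)$. The expectation inside the intrinsic prior is the inverse of the default Bayes factor $2^{x_\triangle}B(a_{01}+x_{01},a_{10}+x_{10})/B(a_{01},a_{10})$ of $H$ versus $H_0$ based on $x$. *)

theory Defs
  imports "HOL-Analysis.Analysis"
begin

definition beta_dens :: "real \<Rightarrow> real \<Rightarrow> real \<Rightarrow> real" where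
  "beta_dens u A B = u powr (A - 1) * (1 - u) powr (B - 1) / Beta A B"

definition trinom_pmf :: "nat \<Rightarrow> nat \<Rightarrow> nat \<Rightarrow> real \<Rightarrow> real \<Rightarrow> real" where
  "trinom_pmf n i j p q =
     fact n / (fact i * fact j * fact (n - i - j)) * p ^ i * q ^ j * (1 - p - q) ^ (n - i - j)"

definition intrinsic_prior :: "real \<Rightarrow> real \<Rightarrow> real \<Rightarrow> real \<Rightarrow> nat \<Rightarrow> real \<Rightarrow> real \<Rightarrow> real" where
  "intrinsic_prior a00 a01 a10 a11 n \<eta> \<theta> =
     (let aT = a01 + a10; app = a00 + a01 + a10 + a11 in
      beta_dens \<eta> aT (app - aT) * beta_dens \<theta> a01 a10 *
      (\<Sum>(i, j) \<in> {(i, j). i + j \<le> n}.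
         trinom_pmf n i j (\<eta> * \<theta>) (\<eta> * (1 - \<theta>)) *
         (Beta a01 a10 / (2 ^ (i + j) * Beta (a01 + real i) (a10 + real j)))))"

end

theory Submission
  imports Defs
begin

lemma Beta_pos: "a > 0 \<Longrightarrow> b > (0::real) \<Longrightarrow> Beta a b > 0"
  by (simp add: Beta_def)

lemma comb_fact:
  assumes "i \<le> k" "k \<le> n"
  shows "(fact n / (fact i * fact (k - i) * fact (n - i - (k - i))) :: real)
         = real (n choose k) * real (k choose i)"
proof -
  have e: "n - i - (k - i) = n - k" using assms by simp
  have "real (n choose k) * real (k choose i) = fact n / (fact k * fact (n - k)) * (fact k / (fact i * fact (k - i)))"
    using assms by (simp add: binomial_fact)
  also have "\<dots> = fact n / (fact i * fact (k - i) * fact (n - k))"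
    by (simp add: field_simps)
  finally show ?thesis using e by simp
qed

lemma comb_sum:
  fixes \<eta> :: real
  shows "(\<Sum>(i, j) \<in> {(i, j). i + j \<le> n}.
     fact n / (fact i * fact j * fact (n - i - j)) * \<eta> ^ (i + j) * (1 - \<eta>) ^ (n - i - j) / 2 ^ (i + j)) = 1"
proof -
  have "(\<Sum>(i, j) \<in> {(i, j). i + j \<le> n}.
     fact n / (fact i * fact j * fact (n - i - j)) * \<eta> ^ (i + j) * (1 - \<eta>) ^ (n - i - j) / 2 ^ (i + j))
    = (\<Sum>k\<le>n. \<Sum>i\<le>k. fact n / (fact i * fact (k - i) * fact (n - i - (k - i))) * \<eta> ^ (i + (k - i)) * (1 - \<eta>) ^ (n - i - (k - i)) / 2 ^ (i + (k - i)))"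
    by (rule sum.triangle_reindex_eq)
  also have "\<dots> = (\<Sum>k\<le>n. \<Sum>i\<le>k. real (k choose i) * (real (n choose k) * \<eta> ^ k * (1 - \<eta>) ^ (n - k) / 2 ^ k))"
  proof (rule sum.cong[OF refl], rule sum.cong[OF refl])
    fix k i assume "k \<in> {..n}" "i \<in> {..k}"
    then have "i \<le> k" "k \<le> n" by auto
    then show "fact n / (fact i * fact (k - i) * fact (n - i - (k - i))) * \<eta> ^ (i + (k - i)) * (1 - \<eta>) ^ (n - i - (k - i)) / 2 ^ (i + (k - i))
      = real (k choose i) * (real (n choose k) * \<eta> ^ k * (1 - \<eta>) ^ (n - k) / 2 ^ k)"
      using comb_fact[of i k n] by simp
  qed
  also have "\<dots> = (\<Sum>k\<le>n. real (n choose k) * \<eta> ^ k * (1 - \<eta>) ^ (n - k))"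
  proof (rule sum.cong[OF refl])
    fix k
    have "(\<Sum>i\<le>k. real (k choose i) * (real (n choose k) * \<eta> ^ k * (1 - \<eta>) ^ (n - k) / 2 ^ k))
        = real (\<Sum>i\<le>k. k choose i) * (real (n choose k) * \<eta> ^ k * (1 - \<eta>) ^ (n - k) / 2 ^ k)"
      by (simp only: of_nat_sum sum_distrib_right)
    also have "\<dots> = real (n choose k) * \<eta> ^ k * (1 - \<eta>) ^ (n - k)"
      by (simp add: choose_row_sum)
    finally show "(\<Sum>i\<le>k. real (k choose i) * (real (n choose k) * \<eta> ^ k * (1 - \<eta>) ^ (n - k) / 2 ^ k))
        = real (n choose k) * \<eta> ^ k * (1 - \<eta>) ^ (n - k)" .
  qed
  also have "\<dots> = (\<eta> + (1 - \<eta>)) ^ n"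
    by (rule binomial_ring[symmetric])
  also have "\<dots> = 1" by simp
  finally show ?thesis .
qed

theorem proposition8:
  fixes a00 a01 a10 a11 \<eta> :: real and n :: nat
  assumes "a00 > 0" "a01 > 0" "a10 > 0" "a11 > 0"
    and "0 < \<eta>" "\<eta> < 1"
  shows "((\<lambda>\<theta>. intrinsic_prior a00 a01 a10 a11 n \<eta> \<theta>) has_integral
           beta_dens \<eta> (a01 + a10) ((a00 + a01 + a10 + a11) - (a01 + a10))) {0..1}"
proof -
  define S where "S = {(i::nat, j::nat). i + j \<le> n}"
  have finS: "finite S"
  proof -
    have "S \<subseteq> {..n} \<times> {..n}" unfolding S_def by auto
    then show ?thesis by (rule finite_subset) auto
  qed
  define bd where "bd = beta_dens \<eta> (a01 + a10) ((a00 + a01 + a10 + a11) - (a01 + a10))"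
  define w where "w = (\<lambda>(i::nat, j::nat). fact n / (fact i * fact j * fact (n - i - j)) * \<eta> ^ (i + j) * (1 - \<eta>) ^ (n - i - j) / 2 ^ (i + j))"
  define c where "c = (\<lambda>(i::nat, j::nat). bd * w (i, j) / Beta (a01 + real i) (a10 + real j))"
  define g where "g = (\<lambda>(i::nat, j::nat) (\<theta>::real). \<theta> powr (a01 + real i - 1) * (1 - \<theta>) powr (a10 + real j - 1))"
  have B0: "Beta a01 a10 > 0" using assms by (simp add: Beta_pos)
  have pt: "intrinsic_prior a00 a01 a10 a11 n \<eta> \<theta> = (\<Sum>p\<in>S. c p * g p \<theta>)"
    if th: "\<theta> \<in> {0<..<1}" for \<theta>
  proof -
    have "intrinsic_prior a00 a01 a10 a11 n \<eta> \<theta> =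
      (\<Sum>p\<in>S. bd * beta_dens \<theta> a01 a10 * (case p of (i, j) \<Rightarrow>
         trinom_pmf n i j (\<eta> * \<theta>) (\<eta> * (1 - \<theta>)) *
         (Beta a01 a10 / (2 ^ (i + j) * Beta (a01 + real i) (a10 + real j)))))"
      unfolding intrinsic_prior_def Let_def bd_def S_def by (simp add: sum_distrib_left)
    also have "\<dots> = (\<Sum>p\<in>S. c p * g p \<theta>)"
    proof (rule sum.cong[OF refl])
      fix p assume "p \<in> S"
      obtain i j where p: "p = (i, j)" by fastforce
      have t0: "\<theta> > 0" "1 - \<theta> > 0" using th by auto
      have pw1: "\<theta> powr (a01 - 1) * \<theta> ^ i = \<theta> powr (a01 + real i - 1)"
        using t0 by (simp add: powr_realpow[symmetric] powr_add[symmetric] algebra_simps)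
      have pw2: "(1 - \<theta>) powr (a10 - 1) * (1 - \<theta>) ^ j = (1 - \<theta>) powr (a10 + real j - 1)"
        using t0 by (simp add: powr_realpow[symmetric] powr_add[symmetric] algebra_simps)
      have Bij: "Beta (a01 + real i) (a10 + real j) > 0" using assms
        by (intro Beta_pos) (simp_all add: add_pos_nonneg)
      have e1: "1 - \<eta> * \<theta> - \<eta> * (1 - \<theta>) = 1 - \<eta>" by (simp add: algebra_simps)
      have "bd * beta_dens \<theta> a01 a10 * (trinom_pmf n i j (\<eta> * \<theta>) (\<eta> * (1 - \<theta>)) *
         (Beta a01 a10 / (2 ^ (i + j) * Beta (a01 + real i) (a10 + real j))))
         = bd * (fact n / (fact i * fact j * fact (n - i - j)) * \<eta> ^ (i + j) * (1 - \<eta>) ^ (n - i - j) / 2 ^ (i + j))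
           / Beta (a01 + real i) (a10 + real j) * ((\<theta> powr (a01 - 1) * \<theta> ^ i) * ((1 - \<theta>) powr (a10 - 1) * (1 - \<theta>) ^ j))"
        unfolding beta_dens_def trinom_pmf_def e1 power_mult_distrib power_add
        using B0 Bij by (simp add: divide_simps)
      also have "\<dots> = c p * g p \<theta>" unfolding pw1 pw2 c_def g_def w_def p by simp
      finally show "bd * beta_dens \<theta> a01 a10 * (case p of (i, j) \<Rightarrow>
         trinom_pmf n i j (\<eta> * \<theta>) (\<eta> * (1 - \<theta>)) *
         (Beta a01 a10 / (2 ^ (i + j) * Beta (a01 + real i) (a10 + real j)))) = c p * g p \<theta>"
        using p by simp
    qed
    finally show ?thesis .
  qed
  have int: "((\<lambda>\<theta>. \<Sum>p\<in>S. c p * g p \<theta>) has_integral (\<Sum>p\<in>S. c p * Beta (a01 + real (fst p)) (a10 + real (snd p)))) {0..1}"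
  proof (rule has_integral_sum[OF finS])
    fix p assume "p \<in> S"
    obtain i j where p: "p = (i, j)" by fastforce
    have pos: "a01 + real i > 0" "a10 + real j > 0" using assms by (simp_all add: add_pos_nonneg)
    have gi: "(g p has_integral Beta (a01 + real i) (a10 + real j)) {0..1}"
      unfolding g_def p prod.case by (rule has_integral_Beta_real[OF pos])
    show "((\<lambda>\<theta>. c p * g p \<theta>) has_integral c p * Beta (a01 + real (fst p)) (a10 + real (snd p))) {0..1}"
      using has_integral_mult_right[OF gi, of "c p"] p by simp
  qed
  have val: "(\<Sum>p\<in>S. c p * Beta (a01 + real (fst p)) (a10 + real (snd p))) = bd"
  proof -
    have "(\<Sum>p\<in>S. c p * Beta (a01 + real (fst p)) (a10 + real (snd p))) = (\<Sum>p\<in>S. bd * w p)"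
    proof (rule sum.cong[OF refl])
      fix p assume "p \<in> S"
      obtain i j where p: "p = (i, j)" by fastforce
      have "Beta (a01 + real i) (a10 + real j) > 0" using assms
        by (intro Beta_pos) (simp_all add: add_pos_nonneg)
      then show "c p * Beta (a01 + real (fst p)) (a10 + real (snd p)) = bd * w p"
        unfolding c_def p by simp
    qed
    also have "\<dots> = bd * (\<Sum>p\<in>S. w p)" by (simp add: sum_distrib_left)
    also have "(\<Sum>p\<in>S. w p) = 1" unfolding S_def w_def by (rule comb_sum)
    finally show ?thesis by simp
  qed
  show ?thesis
    unfolding bd_def[symmetric]
  proof (rule has_integral_spike_finite[of "{0, 1}", OF _ _ int[unfolded val]])
    show "finite {0::real, 1}" by simp
    fix x assume "x \<in> {0..1::real} - {0, 1}"
    then have "x \<in> {0<..<1}" by auto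
    then show "intrinsic_prior a00 a01 a10 a11 n \<eta> x = (\<Sum>p\<in>S. c p * g p x)"
      using pt by simp
  qed
qed

end
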